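(* For every $n\ge 2$, $\lceil \log_2 n\rceil \le \mathrm{isat}(n,\mathcal{D}_2)\le n+1$.
   Context: $\mathcal{B}_n$ denotes the Boolean lattice $(2^{[n]},\subseteq)$. A family $\mathcal{F}\subseteq 2^{[n]}$ (ordered by inclusion) is induced-$\mathcal{P}$-saturated if it contains no induced copy of $\mathcal{P}$ (an injection $f$ with $u\le v\iff f(u)\subseteq f(v)$) but every family $\mathcal{F}'$ with $\mathcal{F}\subsetneq\mathcal{F}'\subseteq 2^{[n]}$ contains one. $\mathrm{isat}(n,\mathcal{P})$ is the minimum size of an induced-$\mathcal{P}$-saturated family in $\mathcal{B}_n$. $\mathcal{D}_2$ (the diamond) is the four-element poset $\{A,B,C,D\}$ with $A<B<D$, $A<C<D$, and $B,C$ incomparable. *)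

theory Defs
  imports Complex_Main
begin

definition induced_copy :: "'p set \<Rightarrow> ('p \<Rightarrow> 'p \<Rightarrow> bool) \<Rightarrow> 'a set set \<Rightarrow> bool" where
  "induced_copy P le F \<longleftrightarrow>
     (\<exists>f. inj_on f P \<and> f ` P \<subseteq> F \<and> (\<forall>u\<in>P. \<forall>v\<in>P. le u v \<longleftrightarrow> f u \<subseteq> f v))"

definition induced_saturated :: "nat \<Rightarrow> 'p set \<Rightarrow> ('p \<Rightarrow> 'p \<Rightarrow> bool) \<Rightarrow> nat set set \<Rightarrow> bool" where
  "induced_saturated n P le F \<longleftrightarrow>
     F \<subseteq> Pow {0..<n} \<and> \<not> induced_copy P le F \<and>
     (\<forall>F'. F \<subset> F' \<and> F' \<subseteq> Pow {0..<n} \<longrightarrow> induced_copy P le F')"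

definition isat :: "nat \<Rightarrow> 'p set \<Rightarrow> ('p \<Rightarrow> 'p \<Rightarrow> bool) \<Rightarrow> nat" where
  "isat n P le = Min {card F | F. induced_saturated n P le F}"

text \<open>The diamond D_2 on {A,B,C,D} = {0,1,2,3}: A < B < D, A < C < D, B and C incomparable.\<close>

definition diamond_carrier :: "nat set" where
  "diamond_carrier = {0, 1, 2, 3}"

definition diamond_le :: "nat \<Rightarrow> nat \<Rightarrow> bool" where
  "diamond_le u v \<longleftrightarrow> u = v \<or> u = 0 \<or> v = 3"

end

theory Submission
  imports Defs
begin

definition dia :: "nat set set \<Rightarrow> bool" where
  "dia F \<longleftrightarrow> (\<exists>a\<in>F. \<exists>b\<in>F. \<exists>c\<in>F. \<exists>d\<in>F. a \<subset> b \<and> a \<subset> c \<and> b \<subset> d \<and> c \<subset> d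
      \<and> \<not> b \<subseteq> c \<and> \<not> c \<subseteq> b)"

lemma diamond_iff: "induced_copy diamond_carrier diamond_le F \<longleftrightarrow> dia F"
proof
  assume "induced_copy diamond_carrier diamond_le F"
  then obtain f where f: "inj_on f diamond_carrier" "f ` diamond_carrier \<subseteq> F"
    "\<forall>u\<in>diamond_carrier. \<forall>v\<in>diamond_carrier. diamond_le u v \<longleftrightarrow> f u \<subseteq> f v"
    unfolding induced_copy_def by blast
  have m: "f 0 \<in> F" "f 1 \<in> F" "f 2 \<in> F" "f 3 \<in> F" using f(2) by (auto simp: diamond_carrier_def)
  have r: "\<And>u v. u \<in> {0,1,2,3} \<Longrightarrow> v \<in> {0,1,2,3} \<Longrightarrow> (u = v \<or> u = 0 \<or> v = 3) \<longleftrightarrow> f u \<subseteq> f v"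
    using f(3) by (auto simp: diamond_carrier_def diamond_le_def)
  have "f 0 \<subseteq> f 1" "\<not> f 1 \<subseteq> f 0" "f 0 \<subseteq> f 2" "\<not> f 2 \<subseteq> f 0"
       "f 1 \<subseteq> f 3" "\<not> f 3 \<subseteq> f 1" "f 2 \<subseteq> f 3" "\<not> f 3 \<subseteq> f 2"
       "\<not> f 1 \<subseteq> f 2" "\<not> f 2 \<subseteq> f 1"
    using r[of 0 1] r[of 1 0] r[of 0 2] r[of 2 0] r[of 1 3] r[of 3 1] r[of 2 3] r[of 3 2]
      r[of 1 2] r[of 2 1] by auto
  then show "dia F" unfolding dia_def using m by blast
next
  assume "dia F"
  then obtain a b c d where abcd: "a\<in>F" "b\<in>F" "c\<in>F" "d\<in>F" "a \<subset> b" "a \<subset> c" "b \<subset> d" "c \<subset> d"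
      "\<not> b \<subseteq> c" "\<not> c \<subseteq> b" unfolding dia_def by blast
  define f where "f = (\<lambda>x::nat. if x = 0 then a else if x = 1 then b else if x = 2 then c else d)"
  have "inj_on f diamond_carrier" using abcd unfolding inj_on_def f_def diamond_carrier_def by auto
  moreover have "f ` diamond_carrier \<subseteq> F" using abcd unfolding f_def diamond_carrier_def by auto
  moreover have "\<forall>u\<in>diamond_carrier. \<forall>v\<in>diamond_carrier. diamond_le u v \<longleftrightarrow> f u \<subseteq> f v"
    using abcd unfolding f_def diamond_carrier_def diamond_le_def by auto
  ultimately show "induced_copy diamond_carrier diamond_le F" unfolding induced_copy_def by blast
qed

lemma sat_iff: "induced_saturated n diamond_carrier diamond_le F \<longleftrightarrow>
   F \<subseteq> Pow {0..<n} \<and> \<not> dia F \<and> (\<forall>F'. F \<subset> F' \<and> F' \<subseteq> Pow {0..<n} \<longrightarrow> dia F')"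
  unfolding induced_saturated_def diamond_iff ..

definition chain :: "nat \<Rightarrow> nat set set" where
  "chain n = (\<lambda>k. {0..<k}) ` {0..n}"

lemma chain_card: "card (chain n) = n + 1"
proof -
  have "inj_on (\<lambda>k. {0..<k}) {0..n}"
    by (rule inj_onI) (metis atLeast0LessThan lessThan_eq_iff)
  then show ?thesis unfolding chain_def by (simp add: card_image)
qed
lemma chain_mem: "k \<le> n \<Longrightarrow> {0..<k} \<in> chain n"
  unfolding chain_def by auto

lemma chain_nodia: "\<not> dia (chain n)"
proof -
  have "\<And>b c. b \<in> chain n \<Longrightarrow> c \<in> chain n \<Longrightarrow> b \<subseteq> c \<or> c \<subseteq> b"
    unfolding chain_def by (auto simp: nat_le_linear)
  then show ?thesis unfolding dia_def by blast
qed

lemma chain_sat: "induced_saturated n diamond_carrier diamond_le (chain n)"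
  unfolding sat_iff
proof (intro conjI allI impI)
  show "chain n \<subseteq> Pow {0..<n}" unfolding chain_def by auto
  show "\<not> dia (chain n)" by (rule chain_nodia)
next
  fix F' assume F': "chain n \<subset> F' \<and> F' \<subseteq> Pow {0..<n}"
  then obtain S where S: "S \<in> F'" "S \<notin> chain n" by blast
  have Ssub: "S \<subseteq> {0..<n}" using F' S by auto
  have notpre: "\<And>m. m \<le> n \<Longrightarrow> S \<noteq> {0..<m}" using S chain_mem by blast
  have "\<exists>m<n. m \<notin> S"
  proof (rule ccontr)
    assume "\<not> ?thesis"
    then have "{0..<n} \<subseteq> S" by auto
    then have "S = {0..<n}" using Ssub by blast
    then show False using notpre by blast
  qed
  then obtain m where m: "m < n" "m \<notin> S" by blast
  define k where "k = (LEAST k. k \<notin> S)"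
  have kS: "k \<notin> S" unfolding k_def by (rule LeastI[of _ m]) (rule m(2))
  have kle: "k \<le> m" unfolding k_def by (rule Least_le) (rule m(2))
  have pre: "{0..<k} \<subseteq> S"
  proof
    fix y assume "y \<in> {0..<k}"
    then have "y < (LEAST k. k \<notin> S)" unfolding k_def by simp
    then show "y \<in> S" using not_less_Least by blast
  qed
  have "S \<noteq> {0..<k}" using notpre kle m by simp
  then obtain x where x: "x \<in> S" "x \<notin> {0..<k}" using pre by blast
  have xk: "x > k" using x kS by (cases "x = k") auto
  have xn: "x < n" using x Ssub by auto
  have mem: "{} \<in> F'" "{0..<n} \<in> F'" "{0..<k+1} \<in> F'"
    using F' xk xn chain_mem[of 0 n] chain_mem[of n n] chain_mem[of "k+1" n] by auto
  have "S \<noteq> {}" using notpre[of 0] by simp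
  moreover have "S \<noteq> {0..<n}" using notpre by simp
  ultimately have h: "{} \<subset> S" "{} \<subset> {0..<k+1}" "S \<subset> {0..<n}" "{0..<k+1} \<subset> {0..<n}"
      "\<not> S \<subseteq> {0..<k+1}" "\<not> {0..<k+1} \<subseteq> S"
    using Ssub xk xn x kS by auto
  show "dia F'" unfolding dia_def using h mem S(1) by blast
qed
lemma separates:
  assumes sat: "induced_saturated n diamond_carrier diamond_le F"
  shows "inj_on (\<lambda>i. {B\<in>F. i \<in> B}) {0..<n}"
proof (rule inj_onI, rule ccontr)
  fix i j assume i: "i \<in> {0..<n}" and j: "j \<in> {0..<n}"
    and eq: "{B\<in>F. i \<in> B} = {B\<in>F. j \<in> B}" and ij: "i \<noteq> j"
  have Fsub: "F \<subseteq> Pow {0..<n}" and nd: "\<not> dia F"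
    and satF: "\<And>F'. F \<subset> F' \<Longrightarrow> F' \<subseteq> Pow {0..<n} \<Longrightarrow> dia F'"
    using sat unfolding sat_iff by auto
  have fin: "finite F" using Fsub finite_subset by blast
  have ns: "\<And>B. B \<in> F \<Longrightarrow> i \<in> B \<longleftrightarrow> j \<in> B" using eq by blast
  show False
  proof (cases "\<exists>A\<in>F. i \<notin> A")
    case True
    then have "finite {A\<in>F. i \<notin> A}" "{A\<in>F. i \<notin> A} \<noteq> {}" using fin by auto
    from finite_has_maximal[OF this] obtain A where A: "A \<in> {A\<in>F. i \<notin> A}" and Amax: "\<And>b. b \<in> {A\<in>F. i \<notin> A} \<Longrightarrow> A \<le> b \<Longrightarrow> A = b"
      by blast
    have AF: "A \<in> F" and iA: "i \<notin> A" using A by auto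
    have jA: "j \<notin> A" using ns[OF AF] iA by simp
    define S where "S = insert i A"
    have SF: "S \<notin> F"
    proof
      assume "S \<in> F"
      then have "j \<in> S" using ns S_def by blast
      then show False using jA ij S_def by simp
    qed
    have Spow: "S \<subseteq> {0..<n}" using AF Fsub i S_def by auto
    have "F \<subset> insert S F" using SF by blast
    moreover have "insert S F \<subseteq> Pow {0..<n}" using Spow Fsub by blast
    ultimately have "dia (insert S F)" by (rule satF)
    then obtain a b c d where abcd: "a\<in>insert S F" "b\<in>insert S F" "c\<in>insert S F" "d\<in>insert S F"
      "a \<subset> b" "a \<subset> c" "b \<subset> d" "c \<subset> d" "\<not> b \<subseteq> c" "\<not> c \<subseteq> b" unfolding dia_def by blast
    have K1: "\<And>B. B \<in> F \<Longrightarrow> B \<subseteq> S \<longleftrightarrow> B \<subseteq> A"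
    proof -
      fix B assume BF: "B \<in> F"
      show "B \<subseteq> S \<longleftrightarrow> B \<subseteq> A"
      proof
        assume "B \<subseteq> S"
        then have "j \<notin> B" using S_def jA ij by auto
        then have "i \<notin> B" using ns[OF BF] by simp
        then show "B \<subseteq> A" using \<open>B \<subseteq> S\<close> S_def by auto
      qed (auto simp: S_def)
    qed
    have K2: "\<And>B. B \<in> F \<Longrightarrow> S \<subseteq> B \<Longrightarrow> A \<subset> B" using S_def iA by auto
    have K3: "\<And>B. B \<in> F \<Longrightarrow> \<not> B \<subseteq> S \<Longrightarrow> \<not> S \<subseteq> B \<Longrightarrow> \<not> B \<subseteq> A \<and> \<not> A \<subseteq> B"
    proof -
      fix B assume BF: "B \<in> F" and h1: "\<not> B \<subseteq> S" and h2: "\<not> S \<subseteq> B"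
      have "\<not> B \<subseteq> A" using K1[OF BF] h1 by simp
      moreover have "\<not> A \<subseteq> B"
      proof
        assume AB: "A \<subseteq> B"
        show False
        proof (cases "i \<in> B")
          case True then show False using AB h2 S_def by auto
        next
          case False then have "A = B" using Amax[of B] BF AB by auto
          then show False using \<open>\<not> B \<subseteq> A\<close> by simp
        qed
      qed
      ultimately show "\<not> B \<subseteq> A \<and> \<not> A \<subseteq> B" by simp
    qed
    have "dia F"
    proof (cases "a = S")
      case aS: True
      then have "b \<noteq> S" "c \<noteq> S" "d \<noteq> S" using abcd by auto
      then have F3: "b \<in> F" "c \<in> F" "d \<in> F" using abcd by auto
      have "A \<subset> b" "A \<subset> c" using K2 F3 abcd aS by auto
      then show ?thesis unfolding dia_def using F3 AF abcd by blast
    next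
      case aS: False
      then have aF: "a \<in> F" using abcd by auto
      show ?thesis
      proof (cases "d = S")
        case dS: True
        then have "b \<noteq> S" "c \<noteq> S" using abcd by auto
        then have F3: "b \<in> F" "c \<in> F" using abcd by auto
        have "b \<subseteq> A" "c \<subseteq> A" using K1 F3 abcd dS by auto
        then have "b \<subset> A" "c \<subset> A" using abcd by auto
        then show ?thesis unfolding dia_def using F3 AF aF abcd by blast
      next
        case dS: False
        then have dF: "d \<in> F" using abcd by auto
        show ?thesis
        proof (cases "b = S")
          case bS: True
          then have cF: "c \<in> F" using abcd by auto
          have aA: "a \<subseteq> A" using K1[OF aF] abcd bS by auto
          have Ad: "A \<subset> d" using K2[OF dF] abcd bS by auto
          have inc: "\<not> c \<subseteq> A \<and> \<not> A \<subseteq> c" using K3[OF cF] abcd bS by auto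
          have "a \<noteq> A" using inc abcd by auto
          then have "a \<subset> A" using aA by auto
          then show ?thesis unfolding dia_def using aF AF cF dF Ad inc abcd by blast
        next
          case bS: False
          then have bF: "b \<in> F" using abcd by auto
          show ?thesis
          proof (cases "c = S")
            case cS: True
            have aA: "a \<subseteq> A" using K1[OF aF] abcd cS by auto
            have Ad: "A \<subset> d" using K2[OF dF] abcd cS by auto
            have inc: "\<not> b \<subseteq> A \<and> \<not> A \<subseteq> b" using K3[OF bF] abcd cS by auto
            have "a \<noteq> A" using inc abcd by auto
            then have "a \<subset> A" using aA by auto
            then show ?thesis unfolding dia_def using aF AF bF dF Ad inc abcd by blast
          next
            case cS: False
            then have cF: "c \<in> F" using abcd by auto
            show ?thesis unfolding dia_def using aF bF cF dF abcd by blast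
          qed
        qed
      qed
    qed
    then show False using nd by simp
  next
    case False
    then have allI: "\<And>A. A \<in> F \<Longrightarrow> i \<in> A" by blast
    have Fne: "F \<noteq> {}"
    proof
      assume "F = {}"
      then have "dia {{}}" using satF[of "{{}}"] by auto
      then show False unfolding dia_def by auto
    qed
    from finite_has_minimal[OF fin Fne] obtain A where AF: "A \<in> F" and Amin: "\<And>b. b \<in> F \<Longrightarrow> b \<le> A \<Longrightarrow> A = b"
      by blast
    define S where "S = A - {i}"
    have SF: "S \<notin> F" using allI S_def by blast
    have Spow: "S \<subseteq> {0..<n}" using AF Fsub S_def by auto
    have "F \<subset> insert S F" using SF by blast
    moreover have "insert S F \<subseteq> Pow {0..<n}" using Spow Fsub by blast
    ultimately have "dia (insert S F)" by (rule satF)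
    then obtain a b c d where abcd: "a\<in>insert S F" "b\<in>insert S F" "c\<in>insert S F" "d\<in>insert S F"
      "a \<subset> b" "a \<subset> c" "b \<subset> d" "c \<subset> d" "\<not> b \<subseteq> c" "\<not> c \<subseteq> b" unfolding dia_def by blast
    have K1: "\<And>B. B \<in> F \<Longrightarrow> \<not> B \<subseteq> S" using allI S_def by auto
    have K2: "\<And>B. B \<in> F \<Longrightarrow> S \<subseteq> B \<Longrightarrow> A \<subseteq> B" using allI S_def by auto
    have "b \<noteq> S" using abcd K1 by (cases "a = S") auto
    moreover have "c \<noteq> S" using abcd K1 by (cases "a = S") auto
    moreover have "d \<noteq> S" using abcd K1 \<open>b \<noteq> S\<close> by auto
    ultimately have F3: "b \<in> F" "c \<in> F" "d \<in> F" using abcd by auto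
    have "a = S" using abcd F3 nd unfolding dia_def by blast
    then have "A \<subseteq> b" "A \<subseteq> c" using K2 F3 abcd by auto
    then have "A \<subset> b" "A \<subset> c" using abcd by auto
    then have "dia F" unfolding dia_def using F3 AF abcd by blast
    then show False using nd by simp
  qed
qed

lemma lower:
  assumes sat: "induced_saturated n diamond_carrier diamond_le F" and n: "n \<ge> 1"
  shows "nat (ceiling (log 2 (real n))) \<le> card F"
proof -
  have Fsub: "F \<subseteq> Pow {0..<n}" using sat unfolding sat_iff by auto
  have fin: "finite F" using Fsub finite_subset by blast
  have "card {0..<n} \<le> card (Pow F)"
    by (rule card_inj_on_le[OF separates[OF sat]]) (auto simp: fin)
  then have "n \<le> 2 ^ card F" by (simp add: card_Pow fin)
  then have "real n \<le> 2 powr real (card F)" by (simp add: powr_realpow)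
  then have "log 2 (real n) \<le> real (card F)"
    using n by (subst log_le_iff) auto
  then show ?thesis by (simp add: nat_le_iff ceiling_le_iff)
qed

theorem theorem1p5:
  fixes n :: nat
  assumes "n \<ge> 2"
  shows "nat (ceiling (log 2 (real n))) \<le> isat n diamond_carrier diamond_le
       \<and> isat n diamond_carrier diamond_le \<le> n + 1"
proof -
  let ?T = "{card F | F. induced_saturated n diamond_carrier diamond_le F}"
  have "?T \<subseteq> card ` Pow (Pow {0..<n})" unfolding sat_iff by auto
  then have fin: "finite ?T" by (rule finite_subset) auto
  have mem: "n + 1 \<in> ?T" using chain_sat chain_card by (metis (mono_tags, lifting) mem_Collect_eq)
  then have ne: "?T \<noteq> {}" by blast
  have "isat n diamond_carrier diamond_le \<le> n + 1"
    unfolding isat_def using Min_le[OF fin mem] .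
  moreover have "nat (ceiling (log 2 (real n))) \<le> isat n diamond_carrier diamond_le"
    unfolding isat_def using lower assms by (subst Min_ge_iff[OF fin ne]) auto
  ultimately show ?thesis by simp
qed

end
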